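(* Let $\ket{\phi}$ be a state on $n/2$ qubits (indexed by $[n/2]$) which is at least $\epsilon$-far from every separable state along any internal cut, and let $t$ be even. Then $$\Delta_{\phi,t}:=\sum_{\substack{S\subseteq[n/2]\\ 1\notin S,\ S\ne\emptyset}}\mathrm{Tr}[\phi_S^2]^{t/2}\le 2^{n/2}(1-\epsilon^2)^{t/2}.$$ In particular, a choice of $t=O(n/\epsilon^2)$ makes $\Delta_{\phi,t}$ negligible in $n$.
   Context: $\phi_S$ denotes the reduced density matrix of $\ket{\phi}$ on the qubits in $S$. "$\epsilon$-far from every separable state along any internal cut" means: for every nonempty proper $A\subsetneq[n/2]$ and all states $\ket{a}_A,\ket{b}_{[n/2]\setminus A}$, $|\langle\phi|(\ket{a}_A\otimes\ket{b}_{[n/2]\setminus A})|^2\le1-\epsilon^2$. Negligible means smaller than any inverse polynomial in $n$ for large $n$. *)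

theory Defs
  imports Complex_Main
begin

text \<open>A computational basis state of the
  qubits in Q is identified with the subset x of Q of qubits in state 1; a state is a
  complex amplitude function on Pow Q (values outside Pow Q are irrelevant).\<close>

definition is_state :: "nat set \<Rightarrow> (nat set \<Rightarrow> complex) \<Rightarrow> bool" where
  "is_state Q \<psi> \<longleftrightarrow> (\<Sum>x\<in>Pow Q. (cmod (\<psi> x))^2) = 1"

definition braket :: "nat set \<Rightarrow> (nat set \<Rightarrow> complex) \<Rightarrow> (nat set \<Rightarrow> complex) \<Rightarrow> complex" where
  "braket Q \<phi> \<psi> = (\<Sum>x\<in>Pow Q. cnj (\<phi> x) * \<psi> x)"

definition prod_state :: "nat set \<Rightarrow> (nat set \<Rightarrow> complex) \<Rightarrow> (nat set \<Rightarrow> complex) \<Rightarrow> nat set \<Rightarrow> complex" where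
  "prod_state A a b x = a (x \<inter> A) * b (x - A)"

definition rdm :: "nat set \<Rightarrow> nat set \<Rightarrow> (nat set \<Rightarrow> complex) \<Rightarrow> nat set \<Rightarrow> nat set \<Rightarrow> complex" where
  "rdm Q S \<phi> a b = (\<Sum>c\<in>Pow (Q - S). \<phi> (a \<union> c) * cnj (\<phi> (b \<union> c)))"

definition purity :: "nat set \<Rightarrow> nat set \<Rightarrow> (nat set \<Rightarrow> complex) \<Rightarrow> complex" where
  "purity Q S \<phi> = (\<Sum>a\<in>Pow S. \<Sum>b\<in>Pow S. rdm Q S \<phi> a b * rdm Q S \<phi> b a)"

definition far_from_separable :: "nat set \<Rightarrow> real \<Rightarrow> (nat set \<Rightarrow> complex) \<Rightarrow> bool" where
  "far_from_separable Q \<epsilon> \<phi> \<longleftrightarrow>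
     (\<forall>A. A \<noteq> {} \<and> A \<subset> Q \<longrightarrow>
        (\<forall>a b. is_state A a \<and> is_state (Q - A) b \<longrightarrow>
           (cmod (braket Q \<phi> (prod_state A a b)))^2 \<le> 1 - \<epsilon>^2))"

definition Delta :: "nat set \<Rightarrow> (nat set \<Rightarrow> complex) \<Rightarrow> nat \<Rightarrow> real" where
  "Delta Q \<phi> t = (\<Sum>S\<in>{S. S \<subseteq> Q \<and> 1 \<notin> S \<and> S \<noteq> {}}. (Re (purity Q S \<phi>)) ^ (t div 2))"

end

theory Submission
  imports Defs
begin

lemma pow_split:
  assumes "S \<subseteq> Q"
  shows "(\<Sum>x\<in>Pow Q. f x) = (\<Sum>a\<in>Pow S. \<Sum>c\<in>Pow (Q - S). f (a \<union> c))"
proof -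
  have inj: "inj_on (\<lambda>(a,c). a \<union> c) (Pow S \<times> Pow (Q - S))"
    by (auto simp: inj_on_def)
  have img: "(\<lambda>(a,c). a \<union> c) ` (Pow S \<times> Pow (Q - S)) = Pow Q"
  proof
    show "Pow Q \<subseteq> (\<lambda>(a,c). a \<union> c) ` (Pow S \<times> Pow (Q - S))"
    proof
      fix x assume "x \<in> Pow Q"
      then have "x = (\<lambda>(a,c). a \<union> c) (x \<inter> S, x - S)" "(x \<inter> S, x - S) \<in> Pow S \<times> Pow (Q - S)" by auto
      then show "x \<in> (\<lambda>(a,c). a \<union> c) ` (Pow S \<times> Pow (Q - S))" by blast
    qed
  qed (use assms in auto)
  have "(\<Sum>x\<in>Pow Q. f x) = (\<Sum>p\<in>Pow S \<times> Pow (Q - S). f ((\<lambda>(a,c). a \<union> c) p))"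
    using sum.reindex[OF inj, of f] img by simp
  also have "\<dots> = (\<Sum>a\<in>Pow S. \<Sum>c\<in>Pow (Q - S). f (a \<union> c))"
    by (simp add: sum.cartesian_product split_def)
  finally show ?thesis .
qed

lemma purity_expand:
  "purity Q S \<phi> = (\<Sum>c\<in>Pow (Q - S). \<Sum>d\<in>Pow (Q - S).
      (\<Sum>a\<in>Pow S. \<phi> (a \<union> c) * cnj (\<phi> (a \<union> d))) * (\<Sum>b\<in>Pow S. \<phi> (b \<union> d) * cnj (\<phi> (b \<union> c))))"
proof -
  have "purity Q S \<phi> = (\<Sum>a\<in>Pow S. \<Sum>b\<in>Pow S. \<Sum>c\<in>Pow (Q - S). \<Sum>d\<in>Pow (Q - S).
      (\<phi> (a \<union> c) * cnj (\<phi> (a \<union> d))) * (\<phi> (b \<union> d) * cnj (\<phi> (b \<union> c))))"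
    unfolding purity_def rdm_def
    by (simp add: sum_product mult_ac)
  also have "\<dots> = (\<Sum>a\<in>Pow S. \<Sum>c\<in>Pow (Q - S). \<Sum>b\<in>Pow S. \<Sum>d\<in>Pow (Q - S).
      (\<phi> (a \<union> c) * cnj (\<phi> (a \<union> d))) * (\<phi> (b \<union> d) * cnj (\<phi> (b \<union> c))))"
    by (rule sum.cong[OF refl], rule sum.swap)
  also have "\<dots> = (\<Sum>a\<in>Pow S. \<Sum>c\<in>Pow (Q - S). \<Sum>d\<in>Pow (Q - S). \<Sum>b\<in>Pow S.
      (\<phi> (a \<union> c) * cnj (\<phi> (a \<union> d))) * (\<phi> (b \<union> d) * cnj (\<phi> (b \<union> c))))"
    by (rule sum.cong[OF refl], rule sum.cong[OF refl], rule sum.swap)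
  also have "\<dots> = (\<Sum>c\<in>Pow (Q - S). \<Sum>a\<in>Pow S. \<Sum>d\<in>Pow (Q - S). \<Sum>b\<in>Pow S.
      (\<phi> (a \<union> c) * cnj (\<phi> (a \<union> d))) * (\<phi> (b \<union> d) * cnj (\<phi> (b \<union> c))))"
    by (rule sum.swap)
  also have "\<dots> = (\<Sum>c\<in>Pow (Q - S). \<Sum>d\<in>Pow (Q - S). \<Sum>a\<in>Pow S. \<Sum>b\<in>Pow S.
      (\<phi> (a \<union> c) * cnj (\<phi> (a \<union> d))) * (\<phi> (b \<union> d) * cnj (\<phi> (b \<union> c))))"
    by (rule sum.cong[OF refl], rule sum.swap)
  finally show ?thesis by (simp add: sum_product)
qed

lemma braket_prod:
  assumes "finite Q" "S \<subseteq> Q"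
  shows "braket Q \<phi> (prod_state S u v) =
     (\<Sum>d\<in>Pow (Q - S). v d * (\<Sum>a\<in>Pow S. cnj (\<phi> (a \<union> d)) * u a))"
proof -
  have "braket Q \<phi> (prod_state S u v) =
     (\<Sum>a\<in>Pow S. \<Sum>d\<in>Pow (Q - S). cnj (\<phi> (a \<union> d)) * (u ((a \<union> d) \<inter> S) * v ((a \<union> d) - S)))"
    unfolding braket_def prod_state_def by (rule pow_split[OF assms(2)])
  also have "\<dots> = (\<Sum>a\<in>Pow S. \<Sum>d\<in>Pow (Q - S). cnj (\<phi> (a \<union> d)) * (u a * v d))"
  proof (intro sum.cong refl)
    fix a d assume "a \<in> Pow S" "d \<in> Pow (Q - S)"
    then have "(a \<union> d) \<inter> S = a" "(a \<union> d) - S = d" by auto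
    then show "cnj (\<phi> (a \<union> d)) * (u ((a \<union> d) \<inter> S) * v ((a \<union> d) - S)) = cnj (\<phi> (a \<union> d)) * (u a * v d)"
      by simp
  qed
  also have "\<dots> = (\<Sum>d\<in>Pow (Q - S). \<Sum>a\<in>Pow S. v d * (cnj (\<phi> (a \<union> d)) * u a))"
    by (subst sum.swap) (simp add: mult_ac)
  finally show ?thesis by (simp add: sum_distrib_left)
qed

lemma key_bound:
  assumes "finite Q" "S \<subseteq> Q" "S \<noteq> {}" "S \<noteq> Q"
    and far: "far_from_separable Q \<epsilon> \<phi>" and "\<epsilon>^2 \<le> 1"
  shows "(\<Sum>d\<in>Pow (Q - S). (cmod (\<Sum>a\<in>Pow S. cnj (\<phi> (a \<union> d)) * u a))^2)
          \<le> (1 - (\<epsilon>^2)) * (\<Sum>a\<in>Pow S. (cmod (u a))^2)"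
proof -
  define w where "w d = (\<Sum>a\<in>Pow S. cnj (\<phi> (a \<union> d)) * u a)" for d
  define W2 where "W2 = (\<Sum>d\<in>Pow (Q - S). (cmod (w d))^2)"
  define N2 where "N2 = (\<Sum>a\<in>Pow S. (cmod (u a))^2)"
  have finS: "finite (Pow S)" using assms(1,2) finite_subset by auto
  have finT: "finite (Pow (Q - S))" using assms(1) by auto
  have W0: "W2 \<ge> 0" "N2 \<ge> 0" unfolding W2_def N2_def by (auto intro: sum_nonneg)
  show ?thesis
  proof (cases "W2 = 0")
    case True
    have "W2 \<le> (1 - \<epsilon>^2) * N2" using True W0 assms(6) by simp
    then show ?thesis unfolding W2_def N2_def w_def .
  next
    case False
    then have Wpos: "W2 > 0" using W0 by simp
    have Npos: "N2 > 0"
    proof (rule ccontr)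
      assume "\<not> N2 > 0"
      then have "N2 = 0" using W0 by simp
      then have "\<forall>a\<in>Pow S. (cmod (u a))^2 = 0" unfolding N2_def
        using sum_nonneg_eq_0_iff[OF finS, of "\<lambda>a. (cmod (u a))^2"] by simp
      then have "\<forall>a\<in>Pow S. u a = 0" by simp
      then have "\<forall>d. w d = 0" unfolding w_def by simp
      then have "W2 = 0" unfolding W2_def by simp
      then show False using False by simp
    qed
    define N where "N = sqrt N2"
    define W where "W = sqrt W2"
    have NW: "N > 0" "W > 0" "N^2 = N2" "W^2 = W2" using Npos Wpos unfolding N_def W_def by auto
    define a' where "a' a = u a / of_real N" for a
    define b' where "b' d = cnj (w d) / of_real W" for d
    have sa: "is_state S a'"
    proof -
      have "(\<Sum>x\<in>Pow S. (cmod (a' x))^2) = (\<Sum>x\<in>Pow S. (cmod (u x))^2 / N^2)"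
        unfolding a'_def using NW by (simp add: norm_divide power_divide)
      also have "\<dots> = N2 / N^2" unfolding N2_def by (simp add: sum_divide_distrib)
      also have "\<dots> = 1" using NW Npos by simp
      finally show ?thesis unfolding is_state_def .
    qed
    have sb: "is_state (Q - S) b'"
    proof -
      have "(\<Sum>x\<in>Pow (Q - S). (cmod (b' x))^2) = (\<Sum>x\<in>Pow (Q - S). (cmod (w x))^2 / W^2)"
        unfolding b'_def using NW by (simp add: norm_divide power_divide)
      also have "\<dots> = W2 / W^2" unfolding W2_def by (simp add: sum_divide_distrib)
      also have "\<dots> = 1" using NW Wpos by simp
      finally show ?thesis unfolding is_state_def .
    qed
    have "braket Q \<phi> (prod_state S a' b') = (\<Sum>d\<in>Pow (Q - S). b' d * (\<Sum>a\<in>Pow S. cnj (\<phi> (a \<union> d)) * a' a))"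
      by (rule braket_prod[OF assms(1,2)])
    also have "\<dots> = (\<Sum>d\<in>Pow (Q - S). cnj (w d) * w d / of_real (W * N))"
      unfolding b'_def a'_def
    proof (intro sum.cong refl)
      fix d
      have "(\<Sum>a\<in>Pow S. cnj (\<phi> (a \<union> d)) * (u a / of_real N)) = w d / of_real N"
        unfolding w_def by (simp add: sum_divide_distrib)
      then show "cnj (w d) / of_real W * (\<Sum>a\<in>Pow S. cnj (\<phi> (a \<union> d)) * (u a / of_real N))
          = cnj (w d) * w d / of_real (W * N)" by simp
    qed
    also have "\<dots> = (\<Sum>d\<in>Pow (Q - S). of_real ((cmod (w d))^2 / (W * N)))"
    proof (intro sum.cong refl)
      fix d
      have "cnj (w d) * w d = of_real ((cmod (w d))^2)"
        by (subst complex_norm_square) (simp add: mult.commute)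
      then show "cnj (w d) * w d / of_real (W * N) = of_real ((cmod (w d))^2 / (W * N))"
        by (simp only: of_real_divide)
    qed
    also have "\<dots> = of_real (W2 / (W * N))"
      unfolding W2_def by (simp add: sum_divide_distrib)
    finally have br0: "braket Q \<phi> (prod_state S a' b') = of_real (W2 / (W * N))" .
    have wn: "W2 / (W * N) = W / N" using NW by (auto simp: power2_eq_square field_simps)
    have br: "braket Q \<phi> (prod_state S a' b') = of_real (W / N)"
      using br0 by (simp only: wn)
    have SQ: "S \<noteq> {} \<and> S \<subset> Q" using assms(2,3,4) by auto
    have "(cmod (braket Q \<phi> (prod_state S a' b')))^2 \<le> 1 - \<epsilon>^2"
      using far[unfolded far_from_separable_def, rule_format, OF SQ] sa sb by blast
    moreover have "cmod (braket Q \<phi> (prod_state S a' b')) = W / N"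
      unfolding br norm_of_real using NW by simp
    ultimately have "(W / N)^2 \<le> 1 - \<epsilon>^2" by simp
    then have "W2 / N2 \<le> 1 - \<epsilon>^2" using NW by (simp add: power_divide)
    then have "W2 \<le> (1 - (\<epsilon>^2)) * N2" using Npos by (simp add: field_simps)
    then show ?thesis unfolding W2_def N2_def w_def .
  qed
qed

lemma purity_bound:
  assumes "finite Q" "S \<subseteq> Q" "S \<noteq> {}" "S \<noteq> Q"
    and far: "far_from_separable Q \<epsilon> \<phi>" and "\<epsilon>^2 \<le> 1" and st: "is_state Q \<phi>"
  shows "0 \<le> Re (purity Q S \<phi>) \<and> Re (purity Q S \<phi>) \<le> 1 - \<epsilon>^2"
proof -
  define G where "G c d = (\<Sum>a\<in>Pow S. cnj (\<phi> (a \<union> d)) * \<phi> (a \<union> c))" for c d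
  have finS: "finite (Pow S)" using assms(1,2) finite_subset by auto
  have "purity Q S \<phi> = (\<Sum>c\<in>Pow (Q - S). \<Sum>d\<in>Pow (Q - S). of_real ((cmod (G c d))^2))"
    unfolding purity_expand
  proof (intro sum.cong refl)
    fix c d
    have "(\<Sum>a\<in>Pow S. \<phi> (a \<union> c) * cnj (\<phi> (a \<union> d))) = G c d"
      unfolding G_def by (simp add: mult_ac)
    moreover have "(\<Sum>b\<in>Pow S. \<phi> (b \<union> d) * cnj (\<phi> (b \<union> c))) = cnj (G c d)"
      unfolding G_def by (simp add: mult_ac)
    ultimately show "(\<Sum>a\<in>Pow S. \<phi> (a \<union> c) * cnj (\<phi> (a \<union> d))) * (\<Sum>b\<in>Pow S. \<phi> (b \<union> d) * cnj (\<phi> (b \<union> c)))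
       = of_real ((cmod (G c d))^2)"
      using complex_norm_square[of "G c d"] by simp
  qed
  then have P: "Re (purity Q S \<phi>) = (\<Sum>c\<in>Pow (Q - S). \<Sum>d\<in>Pow (Q - S). (cmod (G c d))^2)"
    by simp
  have "0 \<le> (\<Sum>c\<in>Pow (Q - S). \<Sum>d\<in>Pow (Q - S). (cmod (G c d))^2)"
    by (intro sum_nonneg) simp
  moreover have "(\<Sum>c\<in>Pow (Q - S). \<Sum>d\<in>Pow (Q - S). (cmod (G c d))^2)
      \<le> (\<Sum>c\<in>Pow (Q - S). (1 - (\<epsilon>^2)) * (\<Sum>a\<in>Pow S. (cmod (\<phi> (a \<union> c)))^2))"
    unfolding G_def by (intro sum_mono key_bound[OF assms(1-4) far assms(6)])
  moreover have "(\<Sum>c\<in>Pow (Q - S). (1 - (\<epsilon>^2)) * (\<Sum>a\<in>Pow S. (cmod (\<phi> (a \<union> c)))^2))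
      = (1 - (\<epsilon>^2)) * (\<Sum>a\<in>Pow S. \<Sum>c\<in>Pow (Q - S). (cmod (\<phi> (a \<union> c)))^2)"
    by (simp add: sum_distrib_left[symmetric] sum.swap[of _ "Pow (Q - S)"])
  moreover have "(\<Sum>a\<in>Pow S. \<Sum>c\<in>Pow (Q - S). (cmod (\<phi> (a \<union> c)))^2) = 1"
    using st unfolding is_state_def pow_split[OF assms(2)] .
  ultimately show ?thesis using P by simp
qed

theorem fact4p8:
  fixes n t :: nat and \<epsilon> :: real and \<phi> :: "nat set \<Rightarrow> complex"
  assumes "even n"
    and "0 \<le> \<epsilon>" and "\<epsilon> \<le> 1"
    and "is_state {1..n div 2} \<phi>"
    and "far_from_separable {1..n div 2} \<epsilon> \<phi>"
    and "even t"
  shows "Delta {1..n div 2} \<phi> t \<le> 2 ^ (n div 2) * (1 - \<epsilon>^2) ^ (t div 2)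
    \<and> (0 < \<epsilon> \<and> real n / \<epsilon>^2 \<le> real (t div 2) \<longrightarrow>
         Delta {1..n div 2} \<phi> t \<le> (sqrt 2 / exp 1) ^ n)"
proof -
  define Q where "Q = {1..n div 2}"
  define I where "I = {S. S \<subseteq> Q \<and> 1 \<notin> S \<and> S \<noteq> {}}"
  define k where "k = t div 2"
  have e2: "\<epsilon>^2 \<le> 1" using assms(2,3) by (simp add: power_le_one)
  have e0: "0 \<le> 1 - \<epsilon>^2" using e2 by simp
  have finQ: "finite Q" unfolding Q_def by simp
  have IQ: "I \<subseteq> Pow Q" unfolding I_def by auto
  have finI: "finite I" using IQ finQ finite_subset by blast
  have cardI: "card I \<le> 2 ^ (n div 2)"
  proof -
    have "card I \<le> card (Pow Q)" using IQ finQ by (simp add: card_mono)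
    also have "\<dots> = 2 ^ (n div 2)" using finQ by (simp add: card_Pow Q_def)
    finally show ?thesis .
  qed
  have each: "Re (purity Q S \<phi>) ^ k \<le> (1 - (\<epsilon>^2)) ^ k" if "S \<in> I" for S
  proof -
    have S: "S \<subseteq> Q" "1 \<notin> S" "S \<noteq> {}" using that unfolding I_def by auto
    then have "Q \<noteq> {}" by auto
    then have "1 \<in> Q" unfolding Q_def by auto
    then have "S \<noteq> Q" using S by auto
    then have "0 \<le> Re (purity Q S \<phi>) \<and> Re (purity Q S \<phi>) \<le> 1 - \<epsilon>^2"
      using purity_bound[OF finQ S(1) S(3) _ _ e2] assms(4,5) unfolding Q_def by blast
    then show ?thesis by (intro power_mono) auto
  qed
  have D: "Delta Q \<phi> t \<le> 2 ^ (n div 2) * (1 - (\<epsilon>^2)) ^ k"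
  proof -
    have "Delta Q \<phi> t = (\<Sum>S\<in>I. Re (purity Q S \<phi>) ^ k)"
      unfolding Delta_def I_def k_def by simp
    also have "\<dots> \<le> (\<Sum>S\<in>I. (1 - (\<epsilon>^2)) ^ k)" by (intro sum_mono each)
    also have "\<dots> = real (card I) * (1 - (\<epsilon>^2)) ^ k" by simp
    also have "\<dots> \<le> 2 ^ (n div 2) * (1 - (\<epsilon>^2)) ^ k"
    proof (rule mult_right_mono)
      show "real (card I) \<le> 2 ^ (n div 2)" using cardI
        by (metis of_nat_le_iff of_nat_numeral of_nat_power)
    qed (use e0 in simp)
    finally show ?thesis .
  qed
  have E: "Delta Q \<phi> t \<le> (sqrt 2 / exp 1) ^ n" if h: "0 < \<epsilon>" "real n / \<epsilon>^2 \<le> real k"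
  proof -
    have "real n \<le> \<epsilon>^2 * real k" using h by (simp add: field_simps)
    have "(1 - (\<epsilon>^2)) ^ k \<le> exp (- (\<epsilon>^2)) ^ k"
      using e0 exp_ge_add_one_self[of "- (\<epsilon>^2)"] by (intro power_mono) auto
    also have "\<dots> = exp (- (\<epsilon>^2 * real k))"
      by (simp add: exp_of_nat_mult[symmetric] mult_ac)
    also have "\<dots> \<le> exp (- real n)" using \<open>real n \<le> \<epsilon>^2 * real k\<close> by simp
    finally have p: "(1 - (\<epsilon>^2)) ^ k \<le> exp (- real n)" .
    obtain m where m: "n = 2 * m" using assms(1) by blast
    have "(sqrt 2 / exp 1) ^ n = 2 ^ (n div 2) * exp (- real n)"
    proof -
      have "(sqrt 2 / exp 1) ^ n = (sqrt 2)^n / exp 1 ^ n" by (simp add: power_divide)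
      also have "(sqrt 2)^n = 2 ^ (n div 2)" using m by (simp add: power_mult)
      also have "exp 1 ^ n = exp (real n)" by (simp add: exp_of_nat_mult[symmetric])
      finally show ?thesis by (simp add: exp_minus field_simps)
    qed
    then show ?thesis using D p
      by (smt (verit) mult_left_mono zero_le_power)
  qed
  show ?thesis using D E unfolding Q_def k_def by blast
qed
end
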